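(* For all integers $k,n\ge 1$, \begin{align*} \zeta^*(k+1,\underbrace{1,\dots,1}_{n})&=\sum_{t=1}^{n+1}\ \sum_{\substack{a_1+\dots+a_k=n+1-t\\ a_i\ge 0}}\zeta(a_k+t+1,\,a_1+1,\,a_2+1,\dots,a_{k-1}+1)\\ &=\sum_{\substack{a_1+\dots+a_k=n\\ a_i\ge 0}}(a_k+1)\,\zeta(a_k+2,\,a_1+1,\,a_2+1,\dots,a_{k-1}+1). \end{align*}
   Context: For positive integers $k_1,\dots,k_n$ with $k_1\ge 2$, $\zeta(k_1,\dots,k_n)=\sum_{m_1>\dots>m_n\ge 1}\prod_i m_i^{-k_i}$ and $\zeta^*(k_1,\dots,k_n)=\sum_{m_1\ge\dots\ge m_n\ge 1}\prod_i m_i^{-k_i}$. $\underbrace{1,\dots,1}_{n}$ denotes $n$ entries equal to $1$. For $k=1$ the arguments after the first entry are absent. *)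

theory Defs
  imports "HOL-Analysis.Analysis"
begin

definition mzv :: "nat list \<Rightarrow> real" where
  "mzv ks = (\<Sum>\<^sub>\<infinity> ms \<in> {ms :: nat list. length ms = length ks \<and> sorted_wrt (>) ms \<and> (\<forall>m\<in>set ms. m \<ge> 1)}.
       (\<Prod>i<length ks. 1 / real (ms ! i) ^ (ks ! i)))"

definition mzv_star :: "nat list \<Rightarrow> real" where
  "mzv_star ks = (\<Sum>\<^sub>\<infinity> ms \<in> {ms :: nat list. length ms = length ks \<and> sorted_wrt (\<ge>) ms \<and> (\<forall>m\<in>set ms. m \<ge> 1)}.
       (\<Prod>i<length ks. 1 / real (ms ! i) ^ (ks ! i)))"

definition wcomps :: "nat \<Rightarrow> nat \<Rightarrow> nat list set" where
  "wcomps k N = {a. length a = k \<and> sum_list a = N}"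

end

theory Submission
  imports Defs "HOL-Computational_Algebra.Formal_Power_Series"
begin

definition Gs :: "real \<Rightarrow> real fps" where
  "Gs c = Abs_fps (\<lambda>r. 1 / c ^ (Suc r))"

lemma Gs_nth: "fps_nth (Gs c) r = 1 / c ^ (Suc r)"
  by (simp add: Gs_def)

lemma Gs_inv:
  assumes "c \<noteq> 0"
  shows "(fps_const c - fps_X) * Gs c = 1"
proof (rule fps_ext)
  fix n
  show "fps_nth ((fps_const c - fps_X) * Gs c) n = fps_nth 1 n"
    using assms by (cases n) (auto simp: algebra_simps Gs_nth fps_const_mult_left[symmetric]
      simp del: fps_const_mult_left)
qed


primrec Cf :: "nat \<Rightarrow> nat \<Rightarrow> real fps" where
  "Cf 0 n = 1"
| "Cf (Suc m) n = fps_const (real (Suc m)) * Cf m n * Gs (real (Suc m + n))"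

declare Cf.simps(2)[simp del]

lemma cancel_Gs:
  assumes "c \<noteq> 0"
  shows "(fps_const c - fps_X) * (A * Gs c) = A"
proof -
  have "(fps_const c - fps_X) * (A * Gs c) = A * ((fps_const c - fps_X) * Gs c)"
    by (simp add: ac_simps)
  also have "\<dots> = A" using Gs_inv[OF assms] by simp
  finally show ?thesis .
qed

lemma Cf_L1:
  "(fps_const (real (Suc m + n)) - fps_X) * Cf (Suc m) n = fps_const (real (Suc m)) * Cf m n"
  by (simp only: Cf.simps, rule cancel_Gs) simp

lemma Cf_L2:
  "(fps_const (real (Suc b)) - fps_X) * Cf m b
     = (fps_const (real (m + Suc b)) - fps_X) * Cf m (Suc b)"
proof (induction m)
  case 0
  then show ?case by simp
next
  case (Suc m)
  have "(fps_const (real (Suc b)) - fps_X) * Cf (Suc m) b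
      = fps_const (real (Suc m)) * (((fps_const (real (Suc b)) - fps_X) * Cf m b) * Gs (real (Suc m + b)))"
    by (simp add: ac_simps Cf.simps)
  also have "\<dots> = fps_const (real (Suc m)) * (((fps_const (real (Suc m + b)) - fps_X) * (Cf m (Suc b) * Gs (real (Suc m + b)))))"
    using Suc.IH by (simp add: ac_simps)
  also have "\<dots> = fps_const (real (Suc m)) * Cf m (Suc b)"
    by (subst cancel_Gs) auto
  also have "\<dots> = (fps_const (real (Suc m + Suc b)) - fps_X) * (fps_const (real (Suc m)) * Cf m (Suc b) * Gs (real (Suc m + Suc b)))"
    by (subst cancel_Gs) auto
  finally show ?case by (simp add: Cf.simps)
qed

lemma Cf_L3:
  "Cf m b - Cf m (Suc b) = fps_const (real m) * Cf m (Suc b) * Gs (real (Suc b))"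
proof -
  let ?c = "real (Suc b)"
  have e: "(fps_const ?c - fps_X) * (Cf m b - Cf m (Suc b)) = fps_const (real m) * Cf m (Suc b)"
  proof -
    have "(fps_const ?c - fps_X) * (Cf m b - Cf m (Suc b))
        = (fps_const (real (m + Suc b)) - fps_X) * Cf m (Suc b) - (fps_const ?c - fps_X) * Cf m (Suc b)"
      using Cf_L2[of b m] by (simp add: algebra_simps)
    also have "\<dots> = fps_const (real m) * Cf m (Suc b)"
    proof -
      have "fps_const (real (m + Suc b)) = fps_const (real m) + fps_const ?c"
        by simp
      have aux: "\<And>a c x C. (a + c - x) * C - (c - x) * C = (a::real fps) * C"
        by (simp add: algebra_simps)
      show ?thesis unfolding \<open>fps_const (real (m + Suc b)) = fps_const (real m) + fps_const ?c\<close>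
        by (rule aux)
    qed
    finally show ?thesis .
  qed
  have "Cf m b - Cf m (Suc b) = (fps_const ?c - fps_X) * ((Cf m b - Cf m (Suc b)) * Gs ?c)"
    by (subst cancel_Gs) auto
  also have "\<dots> = ((fps_const ?c - fps_X) * (Cf m b - Cf m (Suc b))) * Gs ?c"
    by (simp add: ac_simps)
  also have "\<dots> = fps_const (real m) * Cf m (Suc b) * Gs ?c" by (simp only: e)
  finally show ?thesis .
qed

lemma nth_cX:
  "fps_nth ((fps_const a - fps_X) * (F::real fps)) q = a * fps_nth F q - (if q = 0 then 0 else fps_nth F (q - 1))"
proof -
  have "(fps_const a - fps_X) * F = fps_const a * F - fps_X * F" by (rule left_diff_distrib)
  then show ?thesis by (simp only: fps_sub_nth fps_mult_left_const_nth fps_X_mult_nth)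
qed

definition nnf :: "real fps \<Rightarrow> bool" where
  "nnf F \<longleftrightarrow> (\<forall>i. fps_nth F i \<ge> 0)"

lemma nnf_mult: "nnf F \<Longrightarrow> nnf G \<Longrightarrow> nnf (F * G)"
  unfolding nnf_def by (auto simp: fps_mult_nth intro!: sum_nonneg)

lemma nnf_Gs: "c \<ge> 0 \<Longrightarrow> nnf (Gs c)"
  unfolding nnf_def by (simp add: Gs_nth)

lemma nnf_const: "c \<ge> 0 \<Longrightarrow> nnf (fps_const c)"
  unfolding nnf_def by simp

lemma nnf_one: "nnf 1"
  unfolding nnf_def by simp

lemma nnf_sum: "(\<And>i. i \<in> I \<Longrightarrow> nnf (F i)) \<Longrightarrow> nnf (sum F I)"
  unfolding nnf_def by (auto simp: fps_sum_nth intro!: sum_nonneg)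

lemma nnf_Cf: "nnf (Cf m n)"
  by (induction m) (auto simp: Cf.simps intro!: nnf_mult nnf_Gs nnf_const nnf_one)

lemma Cf_nonneg: "fps_nth (Cf m n) q \<ge> 0"
  using nnf_Cf unfolding nnf_def by blast


lemma harm_lim0:
  fixes f :: "nat \<Rightarrow> real"
  assumes lim: "f \<longlonglongrightarrow> L" and nn: "\<And>a. f a \<ge> 0"
    and sm: "summable (\<lambda>a. f a / (real a + c))" and c: "c > 0"
  shows "L = 0"
proof (rule ccontr)
  have "L \<ge> 0" using lim nn by (intro LIMSEQ_le_const[OF lim]) auto
  moreover assume "L \<noteq> 0"
  ultimately have Lp: "L > 0" by simp
  then have "eventually (\<lambda>a. f a > L / 2) sequentially"
    using lim by (intro order_tendstoD) auto
  then have ev: "eventually (\<lambda>a. norm ((L/2) / (1 + c) * (1 / (real a + 1))) \<le> f a / (real a + c)) sequentially"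
  proof (rule eventually_mono)
    fix a assume fa: "f a > L / 2"
    have "(L/2) / (1 + c) * (1 / (real a + 1)) = (L/2) / ((1 + c) * (real a + 1))"
      by simp
    also have "\<dots> \<le> (L/2) / (real a + c)"
    proof (rule divide_left_mono)
      show "real a + c \<le> (1 + c) * (real a + 1)" using c by (simp add: algebra_simps)
      show "0 \<le> L / 2" using Lp by simp
      show "0 < (1 + c) * (real a + 1) * (real a + c)" using c by (intro mult_pos_pos) auto
    qed
    also have "\<dots> \<le> f a / (real a + c)"
      using fa c by (intro divide_right_mono) auto
    finally show "norm ((L/2) / (1 + c) * (1 / (real a + 1))) \<le> f a / (real a + c)"
      using Lp c by simp
  qed
  have "summable (\<lambda>a. (L/2) / (1 + c) * (1 / (real a + 1)))"
    by (rule summable_comparison_test_ev[OF ev sm])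
  then have "summable (\<lambda>a. 1 / (real a + 1))"
    using Lp c by (subst (asm) summable_cmult_iff) auto
  then have "summable (\<lambda>a. inverse (real (Suc a)))"
    by (simp add: divide_inverse add.commute)
  then have "summable (\<lambda>a. inverse (real a))"
    using summable_Suc_iff[of "\<lambda>a. inverse (real a)"] by simp
  then show False using not_summable_harmonic by blast
qed

lemma conv_ge:
  assumes "nnf F" "b > 0"
  shows "fps_nth (F * Gs b) q \<ge> fps_nth F q / b"
proof -
  have "fps_nth (F * Gs b) q = (\<Sum>i=0..q. fps_nth F i * fps_nth (Gs b) (q - i))"
    by (rule fps_mult_nth)
  also have "\<dots> \<ge> fps_nth F q * fps_nth (Gs b) (q - q)"
    using assms by (intro member_le_sum) (auto simp: nnf_def Gs_nth)
  finally show ?thesis by (simp add: Gs_nth)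
qed

lemma coeff_L1:
  "real (Suc a + n) * fps_nth (Cf (Suc a) n) q - (if q = 0 then 0 else fps_nth (Cf (Suc a) n) (q - 1))
     = real (Suc a) * fps_nth (Cf a n) q"
proof -
  have "fps_nth ((fps_const (real (Suc a + n)) - fps_X) * Cf (Suc a) n) q
      = fps_nth (fps_const (real (Suc a)) * Cf a n) q"
    by (subst Cf_L1) simp
  then show ?thesis by (simp only: nth_cX fps_mult_left_const_nth)
qed

lemma Cf_0: "fps_nth (Cf 0 n) q = (if q = 0 then 1 else 0)"
  by simp

lemma T_i:
  assumes n: "n \<ge> 1"
  shows "(\<lambda>a. fps_nth (Cf (Suc a) n) q / real (Suc a)) sums (1 / real n ^ Suc q)"
proof (induction q rule: less_induct)
  case (less q)
  have IH: "q > 0 \<Longrightarrow> (\<lambda>a. fps_nth (Cf (Suc a) n) (q - 1) / real (Suc a)) sums (1 / real n ^ q)"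
    using less.IH[of "q - 1"] by simp
  define c where "c a = fps_nth (Cf a n) q" for a
  define t where "t a = c (Suc a) / real (Suc a)" for a
  define c' where "c' a = fps_nth (Cf a n) (q - 1)" for a
  define t' where "t' a = c' (Suc a) / real (Suc a)" for a
  define B where "B N = (if q = 0 then 1 else (\<Sum>a<N. t' a))" for N
  have step: "c a - c (Suc a) = real n * t a - (if q = 0 then 0 else t' a)" for a
  proof -
    have E: "real (Suc a) * c a = real (Suc a + n) * c (Suc a) - (if q = 0 then 0 else c' (Suc a))"
      using coeff_L1[of a n q] unfolding c_def c'_def by linarith
    have R: "real (Suc a) * (real n * t a - (if q = 0 then 0 else t' a)) = real n * c (Suc a) - (if q = 0 then 0 else c' (Suc a))"
    proof -
      have g: "\<And>s x y n. s \<noteq> 0 \<Longrightarrow> s * (n * (x / s) - y / s) = n * x - (y::real)"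
        by (simp add: field_simps)
      show ?thesis unfolding t_def t'_def
        using g[of "real (Suc a)" "real n" "c (Suc a)" "if q = 0 then 0 else c' (Suc a)"]
        by (cases "q = 0") simp_all
    qed
    have "real (Suc a) * (c a - c (Suc a)) = real n * c (Suc a) - (if q = 0 then 0 else c' (Suc a))"
      using E by (simp add: algebra_simps)
    then have "real (Suc a) * (c a - c (Suc a)) = real (Suc a) * (real n * t a - (if q = 0 then 0 else t' a))"
      using R by simp
    then show ?thesis by (subst (asm) mult_left_cancel) auto
  qed
  have c0: "c 0 = (if q = 0 then 1 else 0)" by (simp add: c_def)
  have partial: "real n * (\<Sum>a<N. t a) = B N - c N" for N
  proof -
    have "(\<Sum>a<N. c a - c (Suc a)) = c 0 - c N" by (rule sum_lessThan_telescope')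
    moreover have "(\<Sum>a<N. c a - c (Suc a)) = real n * (\<Sum>a<N. t a) - (if q = 0 then 0 else (\<Sum>a<N. t' a))"
      by (simp add: step sum_subtractf sum_distrib_left)
    ultimately show ?thesis using c0 by (cases "q = 0") (auto simp: B_def)
  qed
  have tnn: "t a \<ge> 0" for a by (simp add: t_def c_def Cf_nonneg)
  have t'nn: "t' a \<ge> 0" for a by (simp add: t'_def c'_def Cf_nonneg)
  have cnn: "c a \<ge> 0" for a by (simp add: c_def Cf_nonneg)
  have Blim: "B \<longlonglongrightarrow> 1 / real n ^ q"
  proof (cases "q = 0")
    case True
    then have "B = (\<lambda>_. 1)" by (simp add: B_def fun_eq_iff)
    then show ?thesis using True by simp
  next
    case False
    then have "t' sums (1 / real n ^ q)" using IH unfolding t'_def c'_def by simp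
    moreover have "B = (\<lambda>N. \<Sum>a<N. t' a)" using False by (simp add: B_def fun_eq_iff)
    ultimately show ?thesis by (simp add: sums_def)
  qed
  have Ble: "B N \<le> 1 / real n ^ q" for N
  proof (cases "q = 0")
    case True then show ?thesis by (simp add: B_def)
  next
    case False
    then have s: "t' sums (1 / real n ^ q)" using IH unfolding t'_def c'_def by simp
    have "(\<Sum>a<N. t' a) \<le> suminf t'"
      using s t'nn by (intro sum_le_suminf) (auto simp: sums_iff)
    then show ?thesis using s False by (simp add: B_def sums_iff)
  qed
  have np: "real n > 0" using n by simp
  have "summable t"
  proof (rule summableI_nonneg_bounded[OF tnn])
    fix N
    have "real n * (\<Sum>a<N. t a) \<le> 1 / real n ^ q"
      using partial[of N] Ble[of N] cnn[of N] by simp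
    then show "(\<Sum>a<N. t a) \<le> 1 / real n ^ q / real n"
      using np by (simp add: field_simps)
  qed
  then have tl: "(\<lambda>N. \<Sum>a<N. t a) \<longlonglongrightarrow> suminf t" by (rule summable_LIMSEQ)
  have "(\<lambda>N. B N - real n * (\<Sum>a<N. t a)) \<longlonglongrightarrow> 1 / real n ^ q - real n * suminf t"
    by (intro tendsto_intros Blim tl)
  then have cl: "c \<longlonglongrightarrow> 1 / real n ^ q - real n * suminf t"
    using partial by simp
  have "1 / real n ^ q - real n * suminf t = 0"
  proof (rule harm_lim0[where f = "\<lambda>a. c (Suc a)" and c = 1])
    show "(\<lambda>a. c (Suc a)) \<longlonglongrightarrow> 1 / real n ^ q - real n * suminf t"
      using cl by (rule LIMSEQ_Suc)
    show "summable (\<lambda>a. c (Suc a) / (real a + 1))"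
    proof -
      have "t = (\<lambda>a. c (Suc a) / (real a + 1))" by (simp add: t_def fun_eq_iff add.commute)
      then show ?thesis using \<open>summable t\<close> by simp
    qed
  qed (auto simp: cnn)
  then have "suminf t = 1 / real n ^ Suc q"
    using np by (simp add: field_simps)
  moreover have "t = (\<lambda>a. fps_nth (Cf (Suc a) n) q / real (Suc a))" by (simp add: t_def c_def fun_eq_iff)
  ultimately show ?case
    using \<open>summable t\<close> by (simp add: sums_iff)
qed


lemma T_ii:
  assumes m: "m \<ge> 1"
  shows "(\<lambda>j. fps_nth (Cf m (Suc (n + j)) * Gs (real (Suc (n + j)))) q) sums (fps_nth (Cf m n) q / real m)"
proof -
  define c where "c b = fps_nth (Cf m b) q" for b
  define e where "e j = fps_nth (Cf m (Suc (n + j)) * Gs (real (Suc (n + j)))) q" for j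
  have step: "c (n + j) - c (Suc (n + j)) = real m * e j" for j
  proof -
    have "fps_nth (Cf m (n + j) - Cf m (Suc (n + j))) q
        = fps_nth (fps_const (real m) * (Cf m (Suc (n + j)) * Gs (real (Suc (n + j))))) q"
      by (subst Cf_L3) (simp add: mult.assoc)
    then show ?thesis by (simp only: fps_sub_nth fps_mult_left_const_nth c_def e_def)
  qed
  have enn: "e j \<ge> 0" for j
    using nnf_mult[OF nnf_Cf nnf_Gs, of "real (Suc (n + j))" m "Suc (n + j)"]
    by (simp add: e_def nnf_def)
  have cnn: "c b \<ge> 0" for b by (simp add: c_def Cf_nonneg)
  have mp: "real m > 0" using m by simp
  have partial: "real m * (\<Sum>j<N. e j) = c n - c (n + N)" for N
  proof -
    have "(\<Sum>j<N. c (n + j) - c (Suc (n + j))) = c (n + 0) - c (n + N)"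
      using sum_lessThan_telescope'[of "\<lambda>j. c (n + j)" N] by simp
    then show ?thesis by (simp add: step sum_distrib_left)
  qed
  have "summable e"
  proof (rule summableI_nonneg_bounded[OF enn])
    fix N
    have "real m * (\<Sum>j<N. e j) \<le> c n" using partial[of N] cnn[of "n + N"] by simp
    then show "(\<Sum>j<N. e j) \<le> c n / real m" using mp by (simp add: field_simps)
  qed
  then have el: "(\<lambda>N. \<Sum>j<N. e j) \<longlonglongrightarrow> suminf e" by (rule summable_LIMSEQ)
  have "(\<lambda>N. c n - real m * (\<Sum>j<N. e j)) \<longlonglongrightarrow> c n - real m * suminf e"
    by (intro tendsto_intros el)
  then have cl: "(\<lambda>N. c (n + N)) \<longlonglongrightarrow> c n - real m * suminf e"
    using partial by simp
  have "c n - real m * suminf e = 0"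
  proof (rule harm_lim0[where f = "\<lambda>j. c (n + Suc j)" and c = "real n + 1"])
    show "(\<lambda>j. c (n + Suc j)) \<longlonglongrightarrow> c n - real m * suminf e"
      using LIMSEQ_Suc[OF cl] by simp
    show "summable (\<lambda>j. c (n + Suc j) / (real j + (real n + 1)))"
    proof (rule summable_comparison_test[OF _ \<open>summable e\<close>])
      show "\<exists>N. \<forall>j\<ge>N. norm (c (n + Suc j) / (real j + (real n + 1))) \<le> e j"
      proof (intro exI allI impI)
        fix j :: nat
        have "e j \<ge> fps_nth (Cf m (Suc (n + j))) q / real (Suc (n + j))"
          unfolding e_def by (rule conv_ge[OF nnf_Cf]) simp
        then show "norm (c (n + Suc j) / (real j + (real n + 1))) \<le> e j"
          using cnn[of "n + Suc j"] by (simp add: c_def add.commute add.left_commute)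
      qed
    qed
  qed (auto simp: cnn)
  then have "suminf e = c n / real m" using mp by (simp add: field_simps)
  with \<open>summable e\<close> show ?thesis by (simp add: sums_iff e_def[abs_def] c_def)
qed


lemma has_sum_finsum:
  fixes f :: "'i \<Rightarrow> 'a \<Rightarrow> real"
  assumes "finite I" "\<And>i. i \<in> I \<Longrightarrow> (f i has_sum S i) A"
  shows "((\<lambda>x. \<Sum>i\<in>I. f i x) has_sum (\<Sum>i\<in>I. S i)) A"
  using assms
proof (induction I rule: finite_induct)
  case empty then show ?case by simp
next
  case (insert i I)
  then show ?case by (simp add: has_sum_add)
qed

lemma has_sum_div:
  fixes f :: "'a \<Rightarrow> real"
  assumes "(f has_sum S) A"
  shows "((\<lambda>x. f x / c) has_sum (S / c)) A"
  using has_sum_cmult_left[OF assms, of "inverse c"] by (simp add: divide_inverse)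

lemma range_Suc_eq: "range Suc = {1::nat..}"
  by (auto simp: image_iff Suc_le_eq gr0_conv_Suc)

lemma image_shift_eq: "(\<lambda>j. Suc (n + j)) ` UNIV = {n<..}"
proof (auto simp: image_iff)
  fix x assume "n < x"
  then show "\<exists>j. x = Suc (n + j)" by (intro exI[of _ "x - n - 1"]) simp
qed

lemma Ti_hs:
  assumes "n \<ge> 1"
  shows "((\<lambda>a. fps_nth (Cf a n) q / real a) has_sum (1 / real n ^ Suc q)) {1..}"
proof -
  have "((\<lambda>a. fps_nth (Cf (Suc a) n) q / real (Suc a)) has_sum (1 / real n ^ Suc q)) UNIV"
    by (rule sums_nonneg_imp_has_sum[OF T_i[OF assms]]) (simp add: Cf_nonneg)
  then have "(((\<lambda>a. fps_nth (Cf a n) q / real a) \<circ> Suc) has_sum (1 / real n ^ Suc q)) UNIV"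
    by (simp add: o_def)
  then have "((\<lambda>a. fps_nth (Cf a n) q / real a) has_sum (1 / real n ^ Suc q)) (range Suc)"
    by (subst has_sum_reindex) auto
  then show ?thesis by (simp add: range_Suc_eq)
qed

lemma Tii_hs:
  assumes "m \<ge> 1"
  shows "((\<lambda>b. fps_nth (Cf m b * Gs (real b)) q) has_sum (fps_nth (Cf m n) q / real m)) {n<..}"
proof -
  have "((\<lambda>j. fps_nth (Cf m (Suc (n + j)) * Gs (real (Suc (n + j)))) q) has_sum (fps_nth (Cf m n) q / real m)) UNIV"
    by (rule sums_nonneg_imp_has_sum[OF T_ii[OF assms]])
       (use nnf_mult[OF nnf_Cf nnf_Gs] in \<open>auto simp: nnf_def\<close>)
  then have "(((\<lambda>b. fps_nth (Cf m b * Gs (real b)) q) \<circ> (\<lambda>j. Suc (n + j))) has_sum (fps_nth (Cf m n) q / real m)) UNIV"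
    by (simp add: o_def)
  then have "((\<lambda>b. fps_nth (Cf m b * Gs (real b)) q) has_sum (fps_nth (Cf m n) q / real m)) ((\<lambda>j. Suc (n + j)) ` UNIV)"
    by (subst has_sum_reindex) (auto simp: inj_on_def)
  then show ?thesis by (simp add: image_shift_eq)
qed

lemma conv_Ti:
  assumes "n \<ge> 1"
  shows "((\<lambda>a. fps_nth (Cf a n * K) p / real a) has_sum fps_nth (Gs (real n) * K) p) {1..}"
proof -
  have "((\<lambda>a. \<Sum>i=0..p. (fps_nth (Cf a n) i / real a) * fps_nth K (p - i))
          has_sum (\<Sum>i=0..p. (1 / real n ^ Suc i) * fps_nth K (p - i))) {1..}"
    by (intro has_sum_finsum has_sum_cmult_left Ti_hs assms) auto
  moreover have "(\<lambda>a. \<Sum>i=0..p. (fps_nth (Cf a n) i / real a) * fps_nth K (p - i))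
      = (\<lambda>a. fps_nth (Cf a n * K) p / real a)"
    by (simp add: fps_mult_nth sum_divide_distrib fun_eq_iff)
  moreover have "(\<Sum>i=0..p. (1 / real n ^ Suc i) * fps_nth K (p - i)) = fps_nth (Gs (real n) * K) p"
    by (simp add: fps_mult_nth Gs_nth)
  ultimately show ?thesis by simp
qed

lemma conv_Tii:
  assumes "m \<ge> 1"
  shows "((\<lambda>b. fps_nth (Cf m b * Gs (real b) * K) p) has_sum (fps_nth (Cf m n * K) p / real m)) {n<..}"
proof -
  have "((\<lambda>b. \<Sum>i=0..p. fps_nth (Cf m b * Gs (real b)) i * fps_nth K (p - i))
          has_sum (\<Sum>i=0..p. (fps_nth (Cf m n) i / real m) * fps_nth K (p - i))) {n<..}"
    by (intro has_sum_finsum has_sum_cmult_left Tii_hs assms) auto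
  moreover have "(\<lambda>b. \<Sum>i=0..p. fps_nth (Cf m b * Gs (real b)) i * fps_nth K (p - i))
      = (\<lambda>b. fps_nth (Cf m b * Gs (real b) * K) p)"
    by (simp add: fps_mult_nth[of "Cf m _ * Gs _" K] fun_eq_iff)
  moreover have "(\<Sum>i=0..p. (fps_nth (Cf m n) i / real m) * fps_nth K (p - i)) = fps_nth (Cf m n * K) p / real m"
    by (simp add: fps_mult_nth sum_divide_distrib)
  ultimately show ?thesis by simp
qed

lemma fubini_swap:
  fixes f :: "'a \<Rightarrow> 'b \<Rightarrow> real"
  assumes nn: "\<And>x y. x \<in> A \<Longrightarrow> y \<in> B x \<Longrightarrow> f x y \<ge> 0"
    and inner: "\<And>x. x \<in> A \<Longrightarrow> ((\<lambda>y. f x y) has_sum g x) (B x)"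
    and outer: "(g has_sum S) A"
    and sets: "\<And>x y. (x \<in> A \<and> y \<in> B x) \<longleftrightarrow> (y \<in> C \<and> x \<in> D y)"
    and inner2: "\<And>y. y \<in> C \<Longrightarrow> ((\<lambda>x. f x y) has_sum h y) (D y)"
  shows "(h has_sum S) C"
proof -
  have sm: "(\<lambda>(x, y). f x y) summable_on Sigma A B"
    by (rule summable_on_SigmaI[where g = g]) (use inner outer nn in \<open>auto dest: has_sum_imp_summable\<close>)
  have hs: "((\<lambda>(x, y). f x y) has_sum S) (Sigma A B)"
    by (rule has_sum_SigmaI[OF _ outer sm]) (use inner in auto)
  have eq: "prod.swap ` Sigma C D = Sigma A B"
    using sets by (auto simp: image_iff) (meson sets)+
  have "((\<lambda>(x, y). f x y) has_sum S) (prod.swap ` Sigma C D)"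
    using hs eq by simp
  then have "(((\<lambda>(x, y). f x y) \<circ> prod.swap) has_sum S) (Sigma C D)"
    by (subst (asm) has_sum_reindex) auto
  then have hs2: "((\<lambda>(y, x). f x y) has_sum S) (Sigma C D)"
    by (simp add: o_def case_prod_unfold)
  show ?thesis
    by (rule has_sum_SigmaD[OF hs2]) (use inner2 in auto)
qed


lemma TP:
  assumes m: "m \<ge> 1" and Hnn: "\<And>n. nnf (H n)"
    and hs: "((\<lambda>n. fps_nth (Cf m n * H n) p) has_sum X) N"
  shows "((\<lambda>b. fps_nth (Cf m b * Gs (real b) * (\<Sum>n\<in>{n\<in>N. n < b}. H n)) p) has_sum X / real m) {1..}"
proof (rule fubini_swap[where f = "\<lambda>n b. fps_nth (Cf m b * Gs (real b) * H n) p"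
      and A = N and B = "\<lambda>n. {n<..}" and g = "\<lambda>n. fps_nth (Cf m n * H n) p / real m"
      and D = "\<lambda>b. {n\<in>N. n < b}"])
  show "0 \<le> fps_nth (Cf m b * Gs (real b) * H n) p" for n b
    using nnf_mult[OF nnf_mult[OF nnf_Cf nnf_Gs] Hnn, of "real b" m b n] by (simp add: nnf_def)
  show "((\<lambda>b. fps_nth (Cf m b * Gs (real b) * H n) p) has_sum fps_nth (Cf m n * H n) p / real m) {n<..}" for n
    by (rule conv_Tii[OF m])
  show "((\<lambda>n. fps_nth (Cf m n * H n) p / real m) has_sum X / real m) N"
    by (rule has_sum_div[OF hs])
  show "(n \<in> N \<and> b \<in> {n<..}) = (b \<in> {1..} \<and> n \<in> {n \<in> N. n < b})" for n b
    by auto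
  show "((\<lambda>n. fps_nth (Cf m b * Gs (real b) * H n) p) has_sum
          fps_nth (Cf m b * Gs (real b) * (\<Sum>n\<in>{n\<in>N. n < b}. H n)) p) {n \<in> N. n < b}" for b
  proof -
    have fin: "finite {n \<in> N. n < b}" by simp
    have "fps_nth (Cf m b * Gs (real b) * (\<Sum>n\<in>{n\<in>N. n < b}. H n)) p
        = (\<Sum>n\<in>{n\<in>N. n < b}. fps_nth (Cf m b * Gs (real b) * H n) p)"
      by (simp add: sum_distrib_left fps_sum_nth)
    then show ?thesis using has_sum_finite[OF fin] by simp
  qed
qed

primrec Wf :: "nat \<Rightarrow> nat \<Rightarrow> real fps" where
  "Wf 0 b = 1"
| "Wf (Suc i) b = (\<Sum>n\<in>{1..<b}. Gs (real n) * Wf i n)"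

lemma nnf_Wf: "nnf (Wf i b)"
  by (induction i arbitrary: b) (auto intro!: nnf_sum nnf_mult nnf_Gs nnf_one)

lemma chain:
  assumes m: "m \<ge> 1"
  shows "((\<lambda>b. fps_nth (Cf m b * (Gs (real b) * Wf i b)) p) has_sum (fps_nth (Cf m 0) p / real m ^ Suc i)) {1..}"
proof (induction i)
  case 0
  have "((\<lambda>n. fps_nth (Cf m n * 1) p) has_sum fps_nth (Cf m 0) p) {0}"
    using has_sum_finite[of "{0::nat}" "\<lambda>n. fps_nth (Cf m n * 1) p"] by simp
  from TP[OF m _ this] have "((\<lambda>b. fps_nth (Cf m b * Gs (real b) * (\<Sum>n\<in>{n\<in>{0}. n < b}. 1)) p) has_sum
      fps_nth (Cf m 0) p / real m) {1..}"
    using nnf_one by blast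
  moreover have "{n\<in>{0::nat}. n < b} = {0}" if "b \<in> {1..}" for b using that by auto
  ultimately show ?case
    by (subst (asm) has_sum_cong[where g = "\<lambda>b. fps_nth (Cf m b * (Gs (real b) * Wf 0 b)) p"]) auto
next
  case (Suc i)
  from TP[OF m nnf_mult[OF nnf_Gs nnf_Wf] Suc.IH[simplified mult.assoc]]
  have "((\<lambda>b. fps_nth (Cf m b * Gs (real b) * (\<Sum>n\<in>{n\<in>{1..}. n < b}. Gs (real n) * Wf i n)) p) has_sum
      fps_nth (Cf m 0) p / real m ^ Suc i / real m) {1..}"
    by simp
  moreover have "{n\<in>{1..}. n < b} = {1..<b}" for b :: nat by auto
  ultimately show ?case
    by (simp add: mult.assoc mult.commute)
qed


lemma c0_formula:
  "fps_nth (Cf m 0) p = real (m + 1) * fps_nth (Cf m 1) p + real m * (\<Sum>q<p. fps_nth (Cf m 1) q)"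
proof -
  have E: "fps_nth ((fps_const (real (Suc 0)) - fps_X) * Cf m 0) q
         = fps_nth ((fps_const (real (m + Suc 0)) - fps_X) * Cf m (Suc 0)) q" for q
    using Cf_L2[of 0 m] by simp
  have E': "fps_nth (Cf m 0) q - (if q = 0 then 0 else fps_nth (Cf m 0) (q - 1))
      = real (m + 1) * fps_nth (Cf m 1) q - (if q = 0 then 0 else fps_nth (Cf m 1) (q - 1))" for q
    using E[of q] by (simp only: nth_cX) simp
  show ?thesis
  proof (induction p)
    case 0 then show ?case using E'[of 0] by simp
  next
    case (Suc p)
    have "fps_nth (Cf m 0) (Suc p) = fps_nth (Cf m 0) p + real (m + 1) * fps_nth (Cf m 1) (Suc p) - fps_nth (Cf m 1) p"
      using E'[of "Suc p"] by simp
    then show ?case using Suc.IH by (simp add: algebra_simps)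
  qed
qed

lemma c0_bound: "fps_nth (Cf m 0) p \<le> real (m + 1) * (\<Sum>q\<le>p. fps_nth (Cf m 1) q)"
proof -
  have "real m * (\<Sum>q<p. fps_nth (Cf m 1) q) \<le> real (m + 1) * (\<Sum>q<p. fps_nth (Cf m 1) q)"
    by (intro mult_right_mono sum_nonneg Cf_nonneg) auto
  then show ?thesis
    by (simp add: c0_formula lessThan_Suc_atMost[symmetric] algebra_simps)
qed

lemma LHS_summable:
  assumes k: "k \<ge> 1"
  shows "(\<lambda>m. fps_nth (Cf m 0) p / real m ^ Suc k) summable_on {1..}"
proof (rule summable_on_comparison_test)
  have "((\<lambda>m. 2 * (\<Sum>q\<in>{..p}. fps_nth (Cf m 1) q / real m)) has_sum 2 * (\<Sum>q\<in>{..p}. 1 / real 1 ^ Suc q)) {1..}"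
    by (intro has_sum_cmult_right has_sum_finsum Ti_hs) auto
  then show "(\<lambda>m. 2 * (\<Sum>q\<in>{..p}. fps_nth (Cf m 1) q / real m)) summable_on {1..}"
    by (rule has_sum_imp_summable)
  show "0 \<le> fps_nth (Cf m 0) p / real m ^ Suc k" for m
    by (simp add: Cf_nonneg)
  show "fps_nth (Cf m 0) p / real m ^ Suc k \<le> 2 * (\<Sum>q\<in>{..p}. fps_nth (Cf m 1) q / real m)"
    if "m \<in> {1..}" for m
  proof -
    define S where "S = (\<Sum>q\<le>p. fps_nth (Cf m 1) q)"
    have S0: "S \<ge> 0" unfolding S_def by (intro sum_nonneg Cf_nonneg)
    have m1: "real m \<ge> 1" using that by simp
    have "real m ^ 2 \<le> real m ^ Suc k"
      using k m1 by (intro power_increasing) auto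
    have "fps_nth (Cf m 0) p / real m ^ Suc k \<le> real (m + 1) * S / real m ^ Suc k"
      using c0_bound[of m p] m1 by (intro divide_right_mono) (auto simp: S_def)
    also have "\<dots> \<le> real (m + 1) * S / real m ^ 2"
      using \<open>real m ^ 2 \<le> real m ^ Suc k\<close> m1 S0
      by (intro divide_left_mono mult_nonneg_nonneg mult_pos_pos) auto
    also have "\<dots> \<le> 2 * S / real m"
    proof -
      have "real (m + 1) * S * real m \<le> (2 * real m) * S * real m"
        using m1 S0 by (intro mult_right_mono) auto
      then have "real (m + 1) * S * real m \<le> 2 * S * real m ^ 2"
        by (simp add: power2_eq_square algebra_simps)
      then show ?thesis using m1 by (simp add: field_simps)
    qed
    also have "\<dots> = 2 * (\<Sum>q\<in>{..p}. fps_nth (Cf m 1) q / real m)"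
      by (simp only: S_def times_divide_eq_right[symmetric] sum_divide_distrib)
    finally show ?thesis .
  qed
qed

lemma final_swap:
  assumes k: "k \<ge> 1"
    and hs: "((\<lambda>m. fps_nth (Cf m 0) p / real m ^ Suc k) has_sum S) {1..}"
  shows "((\<lambda>b. fps_nth (Gs (real b) * (Gs (real b) * Wf (k - 1) b)) p) has_sum S) {1..}"
proof (rule fubini_swap[where f = "\<lambda>m b. fps_nth (Cf m b * (Gs (real b) * Wf (k - 1) b)) p / real m"
      and A = "{1..}" and B = "\<lambda>_. {1..}" and D = "\<lambda>_. {1..}", OF _ _ hs])
  show "0 \<le> fps_nth (Cf m b * (Gs (real b) * Wf (k - 1) b)) p / real m" for m b
  proof -
    have "nnf (Cf m b * (Gs (real b) * Wf (k - 1) b))" by (intro nnf_mult nnf_Cf nnf_Gs nnf_Wf) simp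
    then show ?thesis by (simp add: nnf_def)
  qed
  show "((\<lambda>b. fps_nth (Cf m b * (Gs (real b) * Wf (k - 1) b)) p / real m) has_sum
          fps_nth (Cf m 0) p / real m ^ Suc k) {1..}" if "m \<in> {1..}" for m
  proof -
    have e: "Suc (k - 1) = k" using k by simp
    have h: "((\<lambda>b. fps_nth (Cf m b * (Gs (real b) * Wf (k - 1) b)) p) has_sum
          fps_nth (Cf m 0) p / real m ^ Suc (k - 1)) {1..}"
      using that by (intro chain) auto
    then have h': "((\<lambda>b. fps_nth (Cf m b * (Gs (real b) * Wf (k - 1) b)) p) has_sum
          fps_nth (Cf m 0) p / real m ^ k) {1..}"
      by (simp only: e)
    have "((\<lambda>b. fps_nth (Cf m b * (Gs (real b) * Wf (k - 1) b)) p / real m) has_sum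
          fps_nth (Cf m 0) p / real m ^ k / real m) {1..}"
      by (rule has_sum_div[OF h'])
    moreover have "fps_nth (Cf m 0) p / real m ^ k / real m = fps_nth (Cf m 0) p / real m ^ Suc k"
      by (simp add: mult.commute)
    ultimately show ?thesis by (simp only:)
  qed
  show "((\<lambda>m. fps_nth (Cf m b * (Gs (real b) * Wf (k - 1) b)) p / real m) has_sum
          fps_nth (Gs (real b) * (Gs (real b) * Wf (k - 1) b)) p) {1..}" if "b \<in> {1..}" for b
    using that by (intro conv_Ti) auto
qed auto


lemma has_sum_Sigma_nn:
  fixes f :: "'a \<Rightarrow> 'b \<Rightarrow> real"
  assumes nn: "\<And>x y. x \<in> A \<Longrightarrow> y \<in> B x \<Longrightarrow> f x y \<ge> 0"
    and inner: "\<And>x. x \<in> A \<Longrightarrow> ((\<lambda>y. f x y) has_sum g x) (B x)"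
    and outer: "(g has_sum S) A"
  shows "((\<lambda>(x, y). f x y) has_sum S) (Sigma A B)"
proof -
  have sm: "(\<lambda>(x, y). f x y) summable_on Sigma A B"
    by (rule summable_on_SigmaI[where g = g]) (use inner outer nn in \<open>auto dest: has_sum_imp_summable\<close>)
  show ?thesis
    by (rule has_sum_SigmaI[OF _ outer sm]) (use inner in auto)
qed

lemma Cf0_nth0: "fps_nth (Cf m 0) 0 = 1"
  by (induction m) (simp_all add: Cf.simps Gs_nth)

lemma Cf0_Suc_0: "fps_nth (Cf 0 0) (Suc p) = 0"
  by simp

lemma Cf0_rec: "fps_nth (Cf (Suc m) 0) (Suc p) = fps_nth (Cf m 0) (Suc p) + fps_nth (Cf (Suc m) 0) p / real (Suc m)"
proof -
  have "real (Suc m) * fps_nth (Cf (Suc m) 0) (Suc p) - fps_nth (Cf (Suc m) 0) p = real (Suc m) * fps_nth (Cf m 0) (Suc p)"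
    using coeff_L1[of m 0 "Suc p"] by simp
  then show ?thesis by (simp add: field_simps)
qed

lemma Cf0_sum: "fps_nth (Cf m 0) (Suc p) = (\<Sum>j\<in>{1..m}. fps_nth (Cf j 0) p / real j)"
proof (induction m)
  case 0 then show ?case by simp
next
  case (Suc m)
  then show ?case by (simp add: Cf0_rec add.commute)
qed

definition Sd :: "nat \<Rightarrow> nat \<Rightarrow> nat list set" where
  "Sd p m = {l. length l = p \<and> sorted_wrt (\<ge>) l \<and> (\<forall>x\<in>set l. 1 \<le> x \<and> x \<le> m)}"

definition St :: "nat \<Rightarrow> nat \<Rightarrow> real" where
  "St p m = (\<Sum>l\<in>Sd p m. \<Prod>i<p. 1 / real (l ! i))"

lemma finite_Sd: "finite (Sd p m)"
proof -
  have "Sd p m \<subseteq> {l. set l \<subseteq> {1..m} \<and> length l = p}" by (auto simp: Sd_def)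
  moreover have "finite {l. set l \<subseteq> {1..m} \<and> length l = p}" by (rule finite_lists_length_eq) simp
  ultimately show ?thesis by (rule finite_subset)
qed

lemma Sd_0: "Sd 0 m = {[]}"
  by (auto simp: Sd_def)

lemma Sd_Suc: "Sd (Suc p) m = (\<lambda>(j, l). j # l) ` Sigma {1..m} (\<lambda>j. Sd p j)"
proof safe
  fix l assume "l \<in> Sd (Suc p) m"
  then obtain j l' where l: "l = j # l'" and "length l' = p" and s: "sorted_wrt (\<ge>) (j # l')"
    and r: "\<forall>x\<in>set (j # l'). 1 \<le> x \<and> x \<le> m"
    unfolding Sd_def by (cases l) auto
  then have "(j, l') \<in> Sigma {1..m} (\<lambda>j. Sd p j)" by (auto simp: Sd_def)
  then show "l \<in> (\<lambda>(j, l). j # l) ` Sigma {1..m} (\<lambda>j. Sd p j)" using l by force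
next
  fix j l assume "j \<in> {1..m}" "l \<in> Sd p j"
  then show "j # l \<in> Sd (Suc p) m" by (auto simp: Sd_def)
qed

lemma St_0: "St 0 m = 1"
  by (simp add: St_def Sd_0)

lemma St_Suc: "St (Suc p) m = (\<Sum>j\<in>{1..m}. St p j / real j)"
proof -
  have inj: "inj_on (\<lambda>(j, l). j # (l::nat list)) (Sigma {1..m} (\<lambda>j. Sd p j))"
    by (auto simp: inj_on_def)
  have "St (Suc p) m = (\<Sum>(j, l)\<in>Sigma {1..m} (\<lambda>j. Sd p j). \<Prod>i<Suc p. 1 / real ((j # l) ! i))"
    unfolding St_def Sd_Suc by (subst sum.reindex[OF inj]) (simp add: case_prod_unfold)
  also have "\<dots> = (\<Sum>j\<in>{1..m}. \<Sum>l\<in>Sd p j. \<Prod>i<Suc p. 1 / real ((j # l) ! i))"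
    by (subst sum.Sigma) (auto simp: finite_Sd)
  also have "\<dots> = (\<Sum>j\<in>{1..m}. \<Sum>l\<in>Sd p j. (1 / real j) * (\<Prod>i<p. 1 / real (l ! i)))"
    by (simp del: prod.lessThan_Suc add: prod.lessThan_Suc_shift)
  also have "\<dots> = (\<Sum>j\<in>{1..m}. St p j / real j)"
    by (simp add: St_def sum_divide_distrib)
  finally show ?thesis .
qed

lemma St_Cf: "St p m = fps_nth (Cf m 0) p"
proof (induction p arbitrary: m)
  case 0 then show ?case by (simp add: St_0 Cf0_nth0)
next
  case (Suc p) then show ?case by (simp add: St_Suc Cf0_sum)
qed

lemma mzv_star_eq:
  assumes hs: "((\<lambda>m. fps_nth (Cf m 0) p / real m ^ Suc k) has_sum S) {1..}"
  shows "mzv_star ((k + 1) # replicate p 1) = S"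
proof -
  define f where "f ms = (\<Prod>i<length ((k + 1) # replicate p 1). 1 / real (ms ! i) ^ (((k + 1) # replicate p (1::nat)) ! i))" for ms
  have setq: "{ms :: nat list. length ms = length ((k + 1) # replicate p 1) \<and> sorted_wrt (\<ge>) ms \<and> (\<forall>m\<in>set ms. m \<ge> 1)}
      = (\<lambda>(m, l). m # l) ` Sigma {1..} (\<lambda>m. Sd p m)"
  proof (intro equalityI subsetI)
    fix ms :: "nat list"
    assume "ms \<in> {ms :: nat list. length ms = length ((k + 1) # replicate p 1) \<and> sorted_wrt (\<ge>) ms \<and> (\<forall>m\<in>set ms. m \<ge> 1)}"
    then have a: "length ms = length ((k + 1) # replicate p 1)" "sorted_wrt (\<ge>) ms" "\<forall>m\<in>set ms. m \<ge> 1"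
      by auto
    then obtain m l where ms: "ms = m # l" by (cases ms) auto
    then have "(m, l) \<in> Sigma {1..} (\<lambda>m. Sd p m)" using a by (auto simp: Sd_def)
    then show "ms \<in> (\<lambda>(m, l). m # l) ` Sigma {1..} (\<lambda>m. Sd p m)" using ms by force
  next
    fix ms assume "ms \<in> (\<lambda>(m, l). m # l) ` Sigma {1..} (\<lambda>m. Sd p m)"
    then show "ms \<in> {ms :: nat list. length ms = length ((k + 1) # replicate p 1) \<and> sorted_wrt (\<ge>) ms \<and> (\<forall>m\<in>set ms. m \<ge> 1)}"
      by (auto simp: Sd_def)
  qed
  have inj: "inj_on (\<lambda>(m, l). m # (l::nat list)) (Sigma {1..} (\<lambda>m. Sd p m))"
    by (auto simp: inj_on_def)
  have fval: "f (m # l) = 1 / real m ^ Suc k * (\<Prod>i<p. 1 / real (l ! i))" if "length l = p" for m l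
    unfolding f_def by (simp del: prod.lessThan_Suc add: prod.lessThan_Suc_shift that)
  have "((\<lambda>(m, l). f (m # l)) has_sum S) (Sigma {1..} (\<lambda>m. Sd p m))"
  proof (rule has_sum_Sigma_nn[where f = "\<lambda>m l. f (m # l)", OF _ _ hs])
    show "0 \<le> f (m # l)" if "m \<in> {1..}" "l \<in> Sd p m" for m l
    proof -
      have "0 \<le> (\<Prod>i<p. 1 / real (l ! i))" by (intro prod_nonneg) auto
      then show ?thesis using that by (simp add: fval Sd_def)
    qed
    show "((\<lambda>l. f (m # l)) has_sum fps_nth (Cf m 0) p / real m ^ Suc k) (Sd p m)" if "m \<in> {1..}" for m
    proof -
      have "(\<Sum>l\<in>Sd p m. f (m # l)) = (\<Sum>l\<in>Sd p m. 1 / real m ^ Suc k * (\<Prod>i<p. 1 / real (l ! i)))"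
        by (rule sum.cong) (auto simp: fval Sd_def)
      also have "\<dots> = fps_nth (Cf m 0) p / real m ^ Suc k"
        by (simp only: sum_distrib_left[symmetric] St_def[symmetric] St_Cf) simp
      finally show ?thesis using has_sum_finite[OF finite_Sd, of "\<lambda>l. f (m # l)" p m] by simp
    qed
  qed
  then have "((f \<circ> (\<lambda>(m, l). m # l)) has_sum S) (Sigma {1..} (\<lambda>m. Sd p m))"
    by (simp add: o_def case_prod_unfold)
  then have "(f has_sum S) ((\<lambda>(m, l). m # l) ` Sigma {1..} (\<lambda>m. Sd p m))"
    by (subst has_sum_reindex[OF inj])
  then have "(f has_sum S) {ms :: nat list. length ms = length ((k + 1) # replicate p 1) \<and> sorted_wrt (\<ge>) ms \<and> (\<forall>m\<in>set ms. m \<ge> 1)}"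
    using setq by simp
  then show ?thesis unfolding mzv_star_def f_def[symmetric] by (rule infsumI)
qed


definition Ch :: "nat \<Rightarrow> nat \<Rightarrow> nat list set" where
  "Ch i b = {l. length l = i \<and> sorted_wrt (>) l \<and> (\<forall>x\<in>set l. 1 \<le> x \<and> x < b)}"

definition Tt :: "nat list \<Rightarrow> nat \<Rightarrow> real" where
  "Tt a b = (\<Sum>l\<in>Ch (length a) b. \<Prod>i<length a. 1 / real (l ! i) ^ Suc (a ! i))"

lemma finite_Ch: "finite (Ch i b)"
proof -
  have "Ch i b \<subseteq> {l. set l \<subseteq> {1..<b} \<and> length l = i}" by (auto simp: Ch_def)
  moreover have "finite {l. set l \<subseteq> {1..<b} \<and> length l = i}" by (rule finite_lists_length_eq) simp
  ultimately show ?thesis by (rule finite_subset)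
qed

lemma Ch_0: "Ch 0 b = {[]}"
  by (auto simp: Ch_def)

lemma Ch_Suc: "Ch (Suc i) b = (\<lambda>(n, l). n # l) ` Sigma {1..<b} (\<lambda>n. Ch i n)"
proof (intro equalityI subsetI)
  fix l assume "l \<in> Ch (Suc i) b"
  then obtain n l' where l: "l = n # l'" and "length l' = i" and "sorted_wrt (>) (n # l')"
    and "\<forall>x\<in>set (n # l'). 1 \<le> x \<and> x < b"
    unfolding Ch_def by (cases l) auto
  then have "(n, l') \<in> Sigma {1..<b} (\<lambda>n. Ch i n)" by (auto simp: Ch_def)
  then show "l \<in> (\<lambda>(n, l). n # l) ` Sigma {1..<b} (\<lambda>n. Ch i n)" using l by force
next
  fix l assume "l \<in> (\<lambda>(n, l). n # l) ` Sigma {1..<b} (\<lambda>n. Ch i n)"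
  then show "l \<in> Ch (Suc i) b" by (auto simp: Ch_def) (metis less_trans)
qed

lemma Tt_Nil: "Tt [] b = 1"
  by (simp add: Tt_def Ch_0)

lemma Tt_Cons: "Tt (r # a) b = (\<Sum>n\<in>{1..<b}. Tt a n / real n ^ Suc r)"
proof -
  have inj: "inj_on (\<lambda>(n, l). n # (l::nat list)) (Sigma {1..<b} (\<lambda>n. Ch (length a) n))"
    by (auto simp: inj_on_def)
  have "Tt (r # a) b = (\<Sum>(n, l)\<in>Sigma {1..<b} (\<lambda>n. Ch (length a) n).
            \<Prod>i<Suc (length a). 1 / real ((n # l) ! i) ^ Suc ((r # a) ! i))"
    unfolding Tt_def length_Cons Ch_Suc by (subst sum.reindex[OF inj]) (simp add: case_prod_unfold)
  also have "\<dots> = (\<Sum>n\<in>{1..<b}. \<Sum>l\<in>Ch (length a) n.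
            \<Prod>i<Suc (length a). 1 / real ((n # l) ! i) ^ Suc ((r # a) ! i))"
    by (subst sum.Sigma) (auto simp: finite_Ch)
  also have "\<dots> = (\<Sum>n\<in>{1..<b}. \<Sum>l\<in>Ch (length a) n.
            (\<Prod>i<length a. 1 / real (l ! i) ^ Suc (a ! i)) / real n ^ Suc r)"
    by (simp del: prod.lessThan_Suc add: prod.lessThan_Suc_shift)
  also have "\<dots> = (\<Sum>n\<in>{1..<b}. Tt a n / real n ^ Suc r)"
    by (simp add: Tt_def sum_divide_distrib)
  finally show ?thesis .
qed

lemma finite_wcomps: "finite (wcomps i t)"
proof -
  have "wcomps i t \<subseteq> {l. set l \<subseteq> {0..t} \<and> length l = i}"
    by (auto simp: wcomps_def member_le_sum_list)
  moreover have "finite {l. set l \<subseteq> {0..t} \<and> length l = i}" by (rule finite_lists_length_eq) simp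
  ultimately show ?thesis by (rule finite_subset)
qed

lemma wcomps_0: "wcomps 0 t = (if t = 0 then {[]} else {})"
  by (auto simp: wcomps_def)

lemma wcomps_Suc: "wcomps (Suc i) t = (\<lambda>(r, a). r # a) ` Sigma {0..t} (\<lambda>r. wcomps i (t - r))"
proof (intro equalityI subsetI)
  fix l assume "l \<in> wcomps (Suc i) t"
  then obtain r a where l: "l = r # a" and "length a = i" and "r + sum_list a = t"
    unfolding wcomps_def by (cases l) auto
  then have "(r, a) \<in> Sigma {0..t} (\<lambda>r. wcomps i (t - r))" by (auto simp: wcomps_def)
  then show "l \<in> (\<lambda>(r, a). r # a) ` Sigma {0..t} (\<lambda>r. wcomps i (t - r))" using l by force
next
  fix l assume "l \<in> (\<lambda>(r, a). r # a) ` Sigma {0..t} (\<lambda>r. wcomps i (t - r))"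
  then show "l \<in> wcomps (Suc i) t" by (auto simp: wcomps_def)
qed

lemma Wf_nth: "fps_nth (Wf i b) t = (\<Sum>a\<in>wcomps i t. Tt a b)"
proof (induction i arbitrary: b t)
  case 0
  then show ?case by (simp add: wcomps_0 Tt_Nil)
next
  case (Suc i)
  have inj: "inj_on (\<lambda>(r, a). r # (a::nat list)) (Sigma {0..t} (\<lambda>r. wcomps i (t - r)))"
    by (auto simp: inj_on_def)
  have "(\<Sum>a\<in>wcomps (Suc i) t. Tt a b) = (\<Sum>(r, a)\<in>Sigma {0..t} (\<lambda>r. wcomps i (t - r)). Tt (r # a) b)"
    unfolding wcomps_Suc by (subst sum.reindex[OF inj]) (simp add: case_prod_unfold)
  also have "\<dots> = (\<Sum>r\<in>{0..t}. \<Sum>a\<in>wcomps i (t - r). \<Sum>n\<in>{1..<b}. Tt a n / real n ^ Suc r)"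
    by (subst sum.Sigma) (auto simp: finite_wcomps Tt_Cons)
  also have "\<dots> = (\<Sum>r\<in>{0..t}. \<Sum>n\<in>{1..<b}. \<Sum>a\<in>wcomps i (t - r). Tt a n / real n ^ Suc r)"
    by (subst sum.swap) simp
  also have "\<dots> = (\<Sum>n\<in>{1..<b}. \<Sum>r\<in>{0..t}. \<Sum>a\<in>wcomps i (t - r). Tt a n / real n ^ Suc r)"
    by (rule sum.swap)
  also have "\<dots> = (\<Sum>n\<in>{1..<b}. \<Sum>r\<in>{0..t}. fps_nth (Gs (real n)) r * fps_nth (Wf i n) (t - r))"
    by (simp add: Suc.IH Gs_nth sum_divide_distrib)
  also have "\<dots> = fps_nth (Wf (Suc i) b) t"
    by (simp add: fps_sum_nth fps_mult_nth)
  finally show ?case ..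
qed

lemma wcomps_snoc_sum:
  assumes "k \<ge> 1"
  shows "(\<Sum>a\<in>wcomps k s. \<Phi> (last a) (butlast a)) = (\<Sum>j\<in>{0..s}. \<Sum>a\<in>wcomps (k - 1) (s - j). \<Phi> j a)"
proof -
  have eq: "wcomps k s = (\<lambda>(j, a). a @ [j]) ` Sigma {0..s} (\<lambda>j. wcomps (k - 1) (s - j))"
  proof (intro equalityI subsetI)
    fix l assume l: "l \<in> wcomps k s"
    then have "l \<noteq> []" using assms by (auto simp: wcomps_def)
    then have l2: "l = butlast l @ [last l]" by simp
    have "sum_list l = sum_list (butlast l) + last l"
      by (subst l2) simp
    then have "(last l, butlast l) \<in> Sigma {0..s} (\<lambda>j. wcomps (k - 1) (s - j))"
      using l by (auto simp: wcomps_def)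
    then show "l \<in> (\<lambda>(j, a). a @ [j]) ` Sigma {0..s} (\<lambda>j. wcomps (k - 1) (s - j))"
      using l2 by (auto simp: image_iff intro!: bexI[of _ "(last l, butlast l)"])
  next
    fix l assume "l \<in> (\<lambda>(j, a). a @ [j]) ` Sigma {0..s} (\<lambda>j. wcomps (k - 1) (s - j))"
    then show "l \<in> wcomps k s" using assms by (auto simp: wcomps_def)
  qed
  have inj: "inj_on (\<lambda>(j, a). a @ [j::nat]) (Sigma {0..s} (\<lambda>j. wcomps (k - 1) (s - j)))"
    by (auto simp: inj_on_def)
  show ?thesis
    unfolding eq by (subst sum.reindex[OF inj]) (simp add: case_prod_unfold sum.Sigma finite_wcomps)
qed


lemma mzv_eq:
  assumes hs: "((\<lambda>b. Tt a b / real b ^ (j + 2)) has_sum X) {1..}"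
  shows "mzv ((j + 2) # map Suc a) = X"
proof -
  define ks where "ks = (j + 2) # map Suc a"
  define f where "f ms = (\<Prod>i<length ks. 1 / real (ms ! i) ^ (ks ! i))" for ms
  have setq: "{ms :: nat list. length ms = length ks \<and> sorted_wrt (>) ms \<and> (\<forall>m\<in>set ms. m \<ge> 1)}
      = (\<lambda>(m, l). m # l) ` Sigma {1..} (\<lambda>m. Ch (length a) m)"
  proof (intro equalityI subsetI)
    fix ms :: "nat list"
    assume "ms \<in> {ms :: nat list. length ms = length ks \<and> sorted_wrt (>) ms \<and> (\<forall>m\<in>set ms. m \<ge> 1)}"
    then have a: "length ms = length ks" "sorted_wrt (>) ms" "\<forall>m\<in>set ms. m \<ge> 1"
      by auto
    then obtain m l where ms: "ms = m # l" by (cases ms) (auto simp: ks_def)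
    then have "(m, l) \<in> Sigma {1..} (\<lambda>m. Ch (length a) m)" using a by (auto simp: Ch_def ks_def)
    then show "ms \<in> (\<lambda>(m, l). m # l) ` Sigma {1..} (\<lambda>m. Ch (length a) m)" using ms by force
  next
    fix ms assume "ms \<in> (\<lambda>(m, l). m # l) ` Sigma {1..} (\<lambda>m. Ch (length a) m)"
    then show "ms \<in> {ms :: nat list. length ms = length ks \<and> sorted_wrt (>) ms \<and> (\<forall>m\<in>set ms. m \<ge> 1)}"
      by (auto simp: Ch_def ks_def)
  qed
  have inj: "inj_on (\<lambda>(m, l). m # (l::nat list)) (Sigma {1..} (\<lambda>m. Ch (length a) m))"
    by (auto simp: inj_on_def)
  have fval: "f (m # l) = (\<Prod>i<length a. 1 / real (l ! i) ^ Suc (a ! i)) / real m ^ (j + 2)"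
    if "length l = length a" for m l
  proof -
    have "f (m # l) = 1 / real m ^ (j + 2) * (\<Prod>i<length a. 1 / real (l ! i) ^ (map Suc a ! i))"
      unfolding f_def ks_def by (simp del: prod.lessThan_Suc add: prod.lessThan_Suc_shift)
    also have "(\<Prod>i<length a. 1 / real (l ! i) ^ (map Suc a ! i)) = (\<Prod>i<length a. 1 / real (l ! i) ^ Suc (a ! i))"
      by (rule prod.cong) auto
    finally show ?thesis by simp
  qed
  have "((\<lambda>(m, l). f (m # l)) has_sum X) (Sigma {1..} (\<lambda>m. Ch (length a) m))"
  proof (rule has_sum_Sigma_nn[where f = "\<lambda>m l. f (m # l)", OF _ _ hs])
    show "0 \<le> f (m # l)" if "m \<in> {1..}" "l \<in> Ch (length a) m" for m l
    proof -
      have "0 \<le> (\<Prod>i<length a. 1 / real (l ! i) ^ Suc (a ! i))" by (intro prod_nonneg) auto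
      then show ?thesis using that by (simp add: fval Ch_def)
    qed
    show "((\<lambda>l. f (m # l)) has_sum Tt a m / real m ^ (j + 2)) (Ch (length a) m)" if "m \<in> {1..}" for m
    proof -
      have "(\<Sum>l\<in>Ch (length a) m. f (m # l)) = (\<Sum>l\<in>Ch (length a) m. (\<Prod>i<length a. 1 / real (l ! i) ^ Suc (a ! i)) / real m ^ (j + 2))"
        by (rule sum.cong) (auto simp: fval Ch_def)
      also have "\<dots> = Tt a m / real m ^ (j + 2)"
        by (simp only: Tt_def sum_divide_distrib)
      finally show ?thesis using has_sum_finite[OF finite_Ch, of "\<lambda>l. f (m # l)" "length a" m] by simp
    qed
  qed
  then have "((f \<circ> (\<lambda>(m, l). m # l)) has_sum X) (Sigma {1..} (\<lambda>m. Ch (length a) m))"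
    by (simp add: o_def case_prod_unfold)
  then have "(f has_sum X) ((\<lambda>(m, l). m # l) ` Sigma {1..} (\<lambda>m. Ch (length a) m))"
    by (subst has_sum_reindex[OF inj])
  then have "(f has_sum X) {ms :: nat list. length ms = length ks \<and> sorted_wrt (>) ms \<and> (\<forall>m\<in>set ms. m \<ge> 1)}"
    using setq by simp
  then have "infsum f {ms :: nat list. length ms = length ks \<and> sorted_wrt (>) ms \<and> (\<forall>m\<in>set ms. m \<ge> 1)} = X"
    by (rule infsumI)
  then show ?thesis unfolding mzv_def f_def ks_def .
qed

lemma GG_nth: "fps_nth (Gs c * Gs c) j = real (j + 1) / c ^ (j + 2)"
proof -
  have "fps_nth (Gs c * Gs c) j = (\<Sum>i=0..j. 1 / c ^ (j + 2))"
    unfolding fps_mult_nth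
  proof (rule sum.cong)
    fix i assume "i \<in> {0..j}"
    then have "c ^ Suc i * c ^ Suc (j - i) = c ^ (j + 2)"
      by (simp add: power_add[symmetric])
    then show "fps_nth (Gs c) i * fps_nth (Gs c) (j - i) = 1 / c ^ (j + 2)"
      by (simp add: Gs_nth)
  qed simp
  then show ?thesis by simp
qed

lemma Tt_nonneg: "Tt a b \<ge> 0"
  unfolding Tt_def by (intro sum_nonneg prod_nonneg) auto

lemma F_expand:
  "fps_nth (Gs (real b) * (Gs (real b) * Wf i b)) p
     = (\<Sum>j\<in>{0..p}. \<Sum>a\<in>wcomps i (p - j). real (j + 1) * (Tt a b / real b ^ (j + 2)))"
proof -
  have "fps_nth (Gs (real b) * (Gs (real b) * Wf i b)) p = fps_nth ((Gs (real b) * Gs (real b)) * Wf i b) p"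
    by (simp add: mult.assoc)
  also have "\<dots> = (\<Sum>j=0..p. real (j + 1) / real b ^ (j + 2) * (\<Sum>a\<in>wcomps i (p - j). Tt a b))"
    by (simp only: fps_mult_nth[of "Gs (real b) * Gs (real b)"] GG_nth Wf_nth)
  also have "\<dots> = (\<Sum>j\<in>{0..p}. \<Sum>a\<in>wcomps i (p - j). real (j + 1) * (Tt a b / real b ^ (j + 2)))"
    by (simp add: sum_distrib_left)
  finally show ?thesis .
qed

lemma comb_sum:
  fixes \<Psi> :: "nat \<Rightarrow> real"
  shows "(\<Sum>t\<in>{0..p}. \<Sum>j\<in>{0..p - t}. \<Psi> (j + t)) = (\<Sum>J\<in>{0..p}. real (J + 1) * \<Psi> J)"
proof (induction p)
  case 0 then show ?case by simp
next
  case (Suc p)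
  have "(\<Sum>t\<in>{0..Suc p}. \<Sum>j\<in>{0..Suc p - t}. \<Psi> (j + t))
      = (\<Sum>t\<in>{0..p}. \<Sum>j\<in>{0..Suc p - t}. \<Psi> (j + t)) + \<Psi> (Suc p)"
    by (simp add: sum.atLeast0_atMost_Suc)
  also have "(\<Sum>t\<in>{0..p}. \<Sum>j\<in>{0..Suc p - t}. \<Psi> (j + t))
      = (\<Sum>t\<in>{0..p}. (\<Sum>j\<in>{0..p - t}. \<Psi> (j + t)) + \<Psi> (Suc p))"
  proof (rule sum.cong)
    fix t assume "t \<in> {0..p}"
    then have e: "Suc p - t = Suc (p - t)" by auto
    show "(\<Sum>j\<in>{0..Suc p - t}. \<Psi> (j + t)) = (\<Sum>j\<in>{0..p - t}. \<Psi> (j + t)) + \<Psi> (Suc p)"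
      unfolding e using \<open>t \<in> {0..p}\<close> by (simp add: sum.atLeast0_atMost_Suc)
  qed simp
  also have "\<dots> = (\<Sum>t\<in>{0..p}. \<Sum>j\<in>{0..p - t}. \<Psi> (j + t)) + real (Suc p) * \<Psi> (Suc p)"
    by (simp add: sum.distrib)
  finally show ?case using Suc.IH by (simp add: sum.atLeast0_atMost_Suc algebra_simps)
qed


theorem proposition2p5:
  fixes k n :: nat
  assumes "k \<ge> 1" and "n \<ge> 1"
  shows "mzv_star ((k + 1) # replicate n 1)
           = (\<Sum>t = 1..n + 1. \<Sum>a \<in> wcomps k (n + 1 - t).
                 mzv ((last a + t + 1) # map (\<lambda>x. x + 1) (butlast a)))
       \<and> (\<Sum>t = 1..n + 1. \<Sum>a \<in> wcomps k (n + 1 - t).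
                 mzv ((last a + t + 1) # map (\<lambda>x. x + 1) (butlast a)))
           = (\<Sum>a \<in> wcomps k n. real (last a + 1) * mzv ((last a + 2) # map (\<lambda>x. x + 1) (butlast a)))"
proof -
  have k: "k \<ge> 1" by fact
  have mapS: "map (\<lambda>x. x + 1) a = map Suc a" for a :: "nat list" by simp
  define S where "S = infsum (\<lambda>m. fps_nth (Cf m 0) n / real m ^ Suc k) {1..}"
  have hs: "((\<lambda>m. fps_nth (Cf m 0) n / real m ^ Suc k) has_sum S) {1..}"
    unfolding S_def using LHS_summable[OF k] by (rule has_sum_infsum)
  have L: "mzv_star ((k + 1) # replicate n 1) = S"
    by (rule mzv_star_eq[OF hs])
  define F where "F b = fps_nth (Gs (real b) * (Gs (real b) * Wf (k - 1) b)) n" for b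
  have hF: "(F has_sum S) {1..}"
    unfolding F_def[abs_def] by (rule final_swap[OF k hs])
  have Fexp: "F b = (\<Sum>j\<in>{0..n}. \<Sum>a\<in>wcomps (k - 1) (n - j). real (j + 1) * (Tt a b / real b ^ (j + 2)))" for b
    unfolding F_def by (rule F_expand)
  have each: "((\<lambda>b. Tt a b / real b ^ (j + 2)) has_sum mzv ((j + 2) # map Suc a)) {1..}"
    if j: "j \<in> {0..n}" and a: "a \<in> wcomps (k - 1) (n - j)" for j a
  proof -
    have "(\<lambda>b. Tt a b / real b ^ (j + 2)) summable_on {1..}"
    proof (rule summable_on_comparison_test[OF has_sum_imp_summable[OF hF]])
      show "0 \<le> Tt a b / real b ^ (j + 2)" for b by (simp add: Tt_nonneg)
      show "Tt a b / real b ^ (j + 2) \<le> F b" if "b \<in> {1..}" for b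
      proof -
        have nn: "0 \<le> real (j' + 1) * (Tt a' b / real b ^ (j' + 2))" for j' a'
          by (simp add: Tt_nonneg)
        have "Tt a b / real b ^ (j + 2) \<le> real (j + 1) * (Tt a b / real b ^ (j + 2))"
          using mult_right_mono[of 1 "real (j + 1)" "Tt a b / real b ^ (j + 2)"] Tt_nonneg[of a b] by simp
        also have "\<dots> \<le> (\<Sum>a'\<in>wcomps (k - 1) (n - j). real (j + 1) * (Tt a' b / real b ^ (j + 2)))"
          using a nn by (intro member_le_sum finite_wcomps) auto
        also have "\<dots> \<le> F b"
          unfolding Fexp using j nn by (intro member_le_sum sum_nonneg) auto
        finally show ?thesis .
      qed
    qed
    then have "((\<lambda>b. Tt a b / real b ^ (j + 2)) has_sum infsum (\<lambda>b. Tt a b / real b ^ (j + 2)) {1..}) {1..}"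
      by (rule has_sum_infsum)
    moreover have "mzv ((j + 2) # map Suc a) = infsum (\<lambda>b. Tt a b / real b ^ (j + 2)) {1..}"
      by (rule mzv_eq[OF calculation])
    ultimately show ?thesis by simp
  qed
  have tot: "((\<lambda>b. \<Sum>j\<in>{0..n}. \<Sum>a\<in>wcomps (k - 1) (n - j). real (j + 1) * (Tt a b / real b ^ (j + 2)))
      has_sum (\<Sum>j\<in>{0..n}. \<Sum>a\<in>wcomps (k - 1) (n - j). real (j + 1) * mzv ((j + 2) # map Suc a))) {1..}"
    by (intro has_sum_finsum has_sum_cmult_right each finite_wcomps) auto
  have tot': "(F has_sum (\<Sum>j\<in>{0..n}. \<Sum>a\<in>wcomps (k - 1) (n - j). real (j + 1) * mzv ((j + 2) # map Suc a))) {1..}"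
    using tot by (simp add: Fexp[abs_def])
  have SR: "S = (\<Sum>j\<in>{0..n}. \<Sum>a\<in>wcomps (k - 1) (n - j). real (j + 1) * mzv ((j + 2) # map Suc a))"
    using has_sum_unique[OF hF tot'] .
  define \<Psi> where "\<Psi> J = (\<Sum>a\<in>wcomps (k - 1) (n - J). mzv ((J + 2) # map Suc a))" for J
  have R2: "(\<Sum>a \<in> wcomps k n. real (last a + 1) * mzv ((last a + 2) # map (\<lambda>x. x + 1) (butlast a)))
      = (\<Sum>j\<in>{0..n}. \<Sum>a\<in>wcomps (k - 1) (n - j). real (j + 1) * mzv ((j + 2) # map Suc a))"
    using wcomps_snoc_sum[OF k, where s = n and \<Phi> = "\<lambda>j a. real (j + 1) * mzv ((j + 2) # map (\<lambda>x. x + 1) a)"]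
    by (simp only: mapS)
  have R2': "(\<Sum>j\<in>{0..n}. \<Sum>a\<in>wcomps (k - 1) (n - j). real (j + 1) * mzv ((j + 2) # map Suc a))
      = (\<Sum>J\<in>{0..n}. real (J + 1) * \<Psi> J)"
    by (simp add: \<Psi>_def sum_distrib_left)
  have R1: "(\<Sum>t = 1..n + 1. \<Sum>a \<in> wcomps k (n + 1 - t).
                 mzv ((last a + t + 1) # map (\<lambda>x. x + 1) (butlast a)))
      = (\<Sum>J\<in>{0..n}. real (J + 1) * \<Psi> J)"
  proof -
    have "(\<Sum>t = 1..n + 1. \<Sum>a \<in> wcomps k (n + 1 - t).
                 mzv ((last a + t + 1) # map (\<lambda>x. x + 1) (butlast a)))
        = (\<Sum>t = 1..n + 1. \<Sum>j\<in>{0..n + 1 - t}. \<Sum>a\<in>wcomps (k - 1) (n + 1 - t - j). mzv ((j + t + 1) # map Suc a))"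
    proof (rule sum.cong)
      fix t
      show "(\<Sum>a \<in> wcomps k (n + 1 - t). mzv ((last a + t + 1) # map (\<lambda>x. x + 1) (butlast a)))
          = (\<Sum>j\<in>{0..n + 1 - t}. \<Sum>a\<in>wcomps (k - 1) (n + 1 - t - j). mzv ((j + t + 1) # map Suc a))"
        using wcomps_snoc_sum[OF k, where s = "n + 1 - t" and \<Phi> = "\<lambda>j a. mzv ((j + t + 1) # map (\<lambda>x. x + 1) a)"]
        by (simp only: mapS)
    qed simp
    also have "\<dots> = (\<Sum>t = 0..n. \<Sum>j\<in>{0..n - t}. \<Sum>a\<in>wcomps (k - 1) (n - t - j). mzv ((j + t + 2) # map Suc a))"
    proof -
      have "{1..n + 1} = {Suc 0..Suc n}" by simp
      then show ?thesis by (simp only: sum.shift_bounds_cl_Suc_ivl) (simp add: add.commute add.left_commute)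
    qed
    also have "\<dots> = (\<Sum>t = 0..n. \<Sum>j\<in>{0..n - t}. \<Psi> (j + t))"
    proof (intro sum.cong refl)
      fix t j assume "t \<in> {0..n}" "j \<in> {0..n - t}"
      then have "n - t - j = n - (j + t)" "j + t + 2 = (j + t) + 2" by auto
      then show "(\<Sum>a\<in>wcomps (k - 1) (n - t - j). mzv ((j + t + 2) # map Suc a)) = \<Psi> (j + t)"
        by (simp add: \<Psi>_def)
    qed
    also have "\<dots> = (\<Sum>J\<in>{0..n}. real (J + 1) * \<Psi> J)"
      by (rule comb_sum)
    finally show ?thesis .
  qed
  show ?thesis
    using L SR R2 R2' R1 by simp
qed

end
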